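(* Let $C_n$ denote the $n$th Catalan number, with $C_0=C_1=1$. Then for every integer $n>1$, $$C_n=\sum_{j\ge 1}(-1)^{j-1}\,C_{n-j}\binom{n-j+1}{j},$$ where the sum runs over $1\le j\le n$.
   Context: $C_n=\frac{1}{n+1}\binom{2n}{n}$. Convention: $\binom{a}{b}=0$ if $b<0$ or $b>a$. *)

theory Defs
  imports Main
begin

definition catalan :: "nat \<Rightarrow> nat" where
  "catalan n = (2 * n choose n) div (n + 1)"

end

theory Submission
  imports Defs "HOL-Computational_Algebra.Formal_Power_Series"
begin

lemma cat_rel: "real (catalan n) * (n+1) = real (2*n choose n)"
proof -
  have e: "(n+1) * (2*n choose (n+1)) = n * (2*n choose n)"
  proof -
    have h1: "Suc n * (2*n choose Suc n) = 2*n*((2*n-1) choose n)" by (rule binomial_absorption)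
    have h2: "(2*n - n) * (2*n choose n) = 2*n*((2*n-1) choose n)" by (rule binomial_absorb_comp)
    have h3: "2*n-n = n" by simp
    show ?thesis by (metis h1 h2 h3 Suc_eq_plus1)
  qed
  have le: "(2*n choose (n+1)) \<le> (2*n choose n)"
  proof -
    have "(n+1) * (2*n choose (n+1)) \<le> (n+1) * (2*n choose n)" using e by simp
    then show ?thesis using mult_le_cancel1[of "n+1"] by (simp del: mult_le_cancel1)
  qed
  define K where "K = (2*n choose n) - (2*n choose (n+1))"
  have d: "(2*n choose n) = (n+1) * K"
    using e unfolding K_def by (simp add: diff_mult_distrib2 algebra_simps)
  have g: "((n+1)*K) div (n+1) = K" by (rule nonzero_mult_div_cancel_left) simp
  have "catalan n = K"
    unfolding catalan_def d by (rule g)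
  then have "catalan n * (n+1) = (2*n choose n)" using d by (simp add: mult.commute)
  then show ?thesis by (metis of_nat_mult of_nat_add of_nat_1)
qed

lemma cbin_aux:
  fixes X B1 B0 n :: nat
  assumes "(2*n+2)*B1 = X*(n+1)" "(2*n+1)*B0 = B1*(n+1)"
  shows "X*(n+1) = 2*(2*n+1)*B0"
proof -
  have "X*(n+1)*(n+1) = (2*n+2)*(B1*(n+1))" using assms(1) by (simp add: algebra_simps)
  also have "\<dots> = (2*n+2)*((2*n+1)*B0)" using assms(2) by simp
  also have "\<dots> = (2*(2*n+1)*B0)*(n+1)" by (simp add: algebra_simps)
  finally have eq: "(X*(n+1))*(n+1) = (2*(2*n+1)*B0)*(n+1)" .
  have nz: "n+1 \<noteq> 0" by simp
  from eq show ?thesis by (rule iffD1[OF mult_right_cancel[OF nz]])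
qed

lemma cbin: "(2*Suc n choose Suc n) * (n+1) = 2*(2*n+1) * (2*n choose n)"
proof -
  define X where "X = (2*Suc n choose Suc n)"
  define B1 where "B1 = (2*n+1 choose n)"
  define B0 where "B0 = (2*n choose n)"
  have a: "(2*n+2) * B1 = X * (n+1)"
    using Suc_times_binomial_eq[of "2*n+1" n] unfolding X_def B1_def
    by (simp del: binomial_Suc_Suc)
  have b: "(2*n+1) * (2*n choose n) = (2*n+1 choose (n+1)) * (n+1)"
    using Suc_times_binomial_eq[of "2*n" n] by (simp del: binomial_Suc_Suc)
  have s: "(2*n+1 choose (n+1)) = (2*n+1 choose n)"
    using binomial_symmetric[of "n" "2*n+1"] by simp
  have b': "(2*n+1) * B0 = B1 * (n+1)" using b s unfolding B0_def B1_def by simp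
  show ?thesis using cbin_aux[OF a b'] unfolding X_def B0_def .
qed

lemma cat_rec: "real (catalan (Suc n)) * (n+2) = 2*(2*n+1) * real (catalan n)"
proof -
  define B2 where "B2 = (2*Suc n choose Suc n)"
  define B0 where "B0 = (2*n choose n)"
  have 1: "real (catalan (Suc n)) * (n+2) = real B2"
    using cat_rel[of "Suc n", folded B2_def] by (simp add: add.commute)
  have 2: "real B2 * (n+1) = 2*(2*n+1) * real B0"
    using arg_cong[OF cbin[of n, folded B2_def B0_def], of real] by (simp add: algebra_simps)
  have 3: "real (catalan n) * (n+1) = real B0" using cat_rel[of n, folded B0_def] by simp
  have "(real (catalan (Suc n)) * (real n+2)) * (real n+1) = real B2 * (n+1)" using 1 by (simp add: add.commute)
  also have "\<dots> = 2*(2*n+1) * real B0" using 2 .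
  also have "\<dots> = 2*(2*n+1) * (real (catalan n) * (n+1))" using 3 by simp
  finally have eq: "(real (catalan (Suc n)) * (real n+2)) * (real n+1) = (2*(2*real n+1) * real (catalan n)) * (real n+1)"
    by (simp add: algebra_simps)
  have nz: "real n+1 \<noteq> 0" by (simp add: add_nonneg_pos)
  from eq show ?thesis by (rule iffD1[OF mult_right_cancel[OF nz]])
qed

lemma gch_rec: "((a::real) gchoose Suc k) = (a gchoose k) * (a - k) / (k+1)"
proof -
  have "of_nat (Suc k) * (a gchoose Suc k) = (a - k) * (a gchoose k)"
    using gbinomial_absorption[of k a] gbinomial_absorb_comp[of a k] by simp
  then show ?thesis by (simp add: field_simps)
qed

lemma cat_gch: "real (catalan n) = -(1/2) * ((1/2::real) gchoose Suc n) * (-4)^Suc n"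
proof (induction n)
  case 0
  then show ?case by (simp add: catalan_def)
next
  case (Suc n)
  have "real (catalan (Suc n)) = 2*(2*n+1) * real (catalan n) / (n+2)"
    using cat_rec[of n] by (simp add: field_simps)
  also have "\<dots> = 2*(2*n+1) * (-(1/2) * ((1/2::real) gchoose Suc n) * (-4)^Suc n) / (n+2)"
    using Suc by simp
  also have "\<dots> = -(1/2) * ((1/2::real) gchoose Suc (Suc n)) * (-4)^Suc (Suc n)"
    by (subst gch_rec[of _ "Suc n"]) (simp add: field_simps)
  finally show ?case .
qed

definition Cf :: "real fps" where "Cf = Abs_fps (\<lambda>n. real (catalan n))"
definition Sf :: "real fps" where "Sf = fps_binomial (1/2) oo (fps_const (-4) * fps_X)"

lemma Sf_sq: "Sf^2 = 1 - 4 * fps_X"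
proof -
  have "Sf^2 = fps_binomial (1/2) ^ 2 oo (fps_const (-4) * fps_X)"
    unfolding Sf_def by (rule fps_compose_power) simp
  also have "fps_binomial (1/2::real) ^ 2 = fps_binomial 1"
    by (simp add: fps_binomial_power)
  also have "\<dots> = 1 + fps_X" by (rule fps_binomial_1)
  finally have e: "Sf^2 = (1 + fps_X) oo (fps_const (-4) * fps_X)" .
  show ?thesis unfolding e
    by (auto simp: fps_eq_iff fps_nth_compose_linear numeral_fps_const le_Suc_eq)
qed

lemma Sf_eq: "Sf = 1 - 2 * fps_X * Cf"
proof (subst fps_eq_iff, intro allI)
  fix n
  show "fps_nth Sf n = fps_nth (1 - 2 * fps_X * Cf) n"
  proof (cases n)
    case 0 then show ?thesis by (simp add: Sf_def)
  next
    case (Suc m)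
    have "fps_nth (2 * fps_X * Cf) n = 2 * real (catalan m)"
      using Suc by (simp add: Cf_def mult.assoc numeral_fps_const)
    then show ?thesis using Suc cat_gch[of m] by (simp add: Sf_def)
  qed
qed

lemma C_eq: "Cf = 1 + fps_X * Cf^2"
proof -
  have "(1 - 2 * fps_X * Cf)^2 = 1 - 4 * fps_X" using Sf_sq Sf_eq by simp
  then have "4 * fps_X * (fps_X * Cf^2 - Cf + 1) = 0"
    by (simp add: algebra_simps power2_eq_square)
  then have "fps_X * Cf^2 - Cf + 1 = 0" by simp
  then show ?thesis by (simp add: algebra_simps)
qed

definition Yf :: "real fps" where "Yf = fps_X * (1 - fps_X)"
definition Df :: "real fps" where "Df = Cf oo Yf"

lemma Yf0: "fps_nth Yf 0 = 0" by (simp add: Yf_def)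

lemma D_eq: "Df = 1 + Yf * Df^2"
proof -
  have "Df = (1 + fps_X * Cf^2) oo Yf" unfolding Df_def using C_eq by simp
  also have "\<dots> = 1 + (fps_X oo Yf) * (Cf oo Yf)^2"
    by (simp add: fps_compose_add_distrib fps_compose_mult_distrib[OF Yf0]
        fps_compose_power[OF Yf0])
  also have "\<dots> = 1 + Yf * Df^2" using Yf0 by (simp add: Df_def)
  finally show ?thesis .
qed

lemma G_eq: "(1 - fps_X) * Df = 1"
proof -
  define G where "G = (1 - fps_X) * Df"
  have "G = (1 - fps_X) + fps_X * G^2"
    unfolding G_def Yf_def by (subst D_eq) (simp add: Yf_def algebra_simps power2_eq_square)
  then have "(G - 1) * (1 - fps_X * (G + 1)) = 0"
    by (simp add: algebra_simps power2_eq_square)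
  moreover have "1 - fps_X * (G + 1) \<noteq> 0"
  proof
    assume "1 - fps_X * (G + 1) = 0"
    then have "fps_nth (1 - fps_X * (G + 1)) 0 = 0" by simp
    then show False by simp
  qed
  ultimately have "G = 1" by simp
  then show ?thesis unfolding G_def .
qed

lemma OmX_pow: "fps_nth ((1 - fps_X) ^ i :: real fps) k = (-1)^k * real (i choose k)"
proof -
  have e: "(1 + fps_X :: real fps) oo (fps_const (-1) * fps_X) = 1 - fps_X"
    by (auto simp: fps_eq_iff fps_nth_compose_linear le_Suc_eq)
  have "(1 - fps_X :: real fps) ^ i = ((1 + fps_X) ^ i) oo (fps_const (-1) * fps_X)"
    unfolding e[symmetric] by (rule fps_compose_power) simp
  also have "(1 + fps_X :: real fps) ^ i = fps_binomial (of_nat i)"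
    by (simp add: fps_binomial_of_nat)
  finally have "(1 - fps_X :: real fps) ^ i = fps_binomial (of_nat i) oo (fps_const (-1) * fps_X)" .
  then show ?thesis by (simp add: fps_nth_compose_linear binomial_gbinomial)
qed

lemma D_nth: "fps_nth Df m = (\<Sum>i=0..m. real (catalan i) * ((-1)^(m-i) * real (i choose (m-i))))"
proof -
  have "fps_nth Df m = (\<Sum>i=0..m. fps_nth Cf i * fps_nth (Yf^i) m)"
    unfolding Df_def by (rule fps_compose_nth)
  also have "\<dots> = (\<Sum>i=0..m. real (catalan i) * ((-1)^(m-i) * real (i choose (m-i))))"
  proof (rule sum.cong[OF refl])
    fix i assume "i \<in> {0..m}"
    then have im: "i \<le> m" by simp
    have "Yf^i = fps_X^i * (1 - fps_X)^i" unfolding Yf_def by (simp add: power_mult_distrib)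
    then have "fps_nth (Yf^i) m = fps_nth ((1 - fps_X)^i) (m - i)"
      using im by (simp add: fps_X_power_mult_nth)
    then show "fps_nth Cf i * fps_nth (Yf^i) m = real (catalan i) * ((-1)^(m-i) * real (i choose (m-i)))"
      by (simp add: Cf_def OmX_pow)
  qed
  finally show ?thesis .
qed

lemma real_version:
  fixes m :: nat
  shows "real (catalan (Suc m)) =
    (\<Sum>i=0..m. (-1)^(m-i) * real (catalan i) * real (Suc i choose Suc (m-i)))"
proof -
  have "fps_nth ((1 - fps_X) * Df) (Suc m) = 0" using G_eq by simp
  then have z: "fps_nth Df (Suc m) - fps_nth Df m = 0" by (simp add: algebra_simps)
  have a: "fps_nth Df (Suc m) = (\<Sum>i=0..m. real (catalan i) * ((-1)^(Suc m-i) * real (i choose (Suc m-i)))) + real (catalan (Suc m))"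
    unfolding D_nth by simp
  have b: "(\<Sum>i=0..m. real (catalan i) * ((-1)^(Suc m-i) * real (i choose (Suc m-i))))
     - fps_nth Df m = - (\<Sum>i=0..m. (-1)^(m-i) * real (catalan i) * real (Suc i choose Suc (m-i)))"
    unfolding D_nth sum_subtractf[symmetric] sum_negf[symmetric]
  proof (rule sum.cong[OF refl])
    fix i assume "i \<in> {0..m}"
    then have im: "Suc m - i = Suc (m - i)" by auto
    show "real (catalan i) * ((-1)^(Suc m-i) * real (i choose (Suc m-i))) -
          real (catalan i) * ((-1)^(m-i) * real (i choose (m-i))) =
          - ((-1)^(m-i) * real (catalan i) * real (Suc i choose Suc (m-i)))"
      unfolding im by (simp add: algebra_simps)
  qed
  show ?thesis using z a b by linarith
qed

theorem theorem2:
  fixes n :: nat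
  assumes "n > 1"
  shows "int (catalan n) =
    (\<Sum>j = 1..n. (-1) ^ (j - 1) * int (catalan (n - j)) * int ((n - j + 1) choose j))"
proof -
  obtain m where n: "n = Suc m" using assms by (cases n) auto
  have r: "(\<Sum>j = 1..n. (-1) ^ (j - 1) * real (catalan (n - j)) * real ((n - j + 1) choose j)) =
    (\<Sum>i=0..m. (-1)^(m-i) * real (catalan i) * real (Suc i choose Suc (m-i)))"
  proof (rule sum.reindex_bij_witness[where i="\<lambda>i. n - i" and j="\<lambda>j. n - j"])
    fix a assume "a \<in> {1..n}"
    then obtain b where ab: "a = Suc b" "b \<le> m" using n by (cases a) auto
    have e1: "m - (n - a) = b" "n - a = m - b" "Suc m - b = Suc (m - b)" using ab n by auto
    show "(-1)^(m-(n-a)) * real (catalan (n-a)) * real (Suc (n-a) choose Suc (m-(n-a))) =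
      (-1) ^ (a - 1) * real (catalan (n - a)) * real ((n - a + 1) choose a)"
      unfolding e1 using ab by simp
  qed (use n in auto)
  have "real_of_int (int (catalan n)) = real_of_int
    (\<Sum>j = 1..n. (-1) ^ (j - 1) * int (catalan (n - j)) * int ((n - j + 1) choose j))"
    using real_version[of m] r n by simp
  then show ?thesis by (simp only: of_int_eq_iff)
qed

end
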